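(* Let $n\ge 1$, $N\ge 1$ be integers, $p\in(0,1)$, and let $I:\{0,1\}^n\to\{0,1\}$ be a decoding-error indicator with error-correcting capability $t$ (an integer $0\le t<n$ such that $I(\mathbf z)=0$ whenever $wt(\mathbf z)\le t$). For $q\in(0,1)$ let $\hat P_{IS}(e;q)=\frac1N\sum_{j=1}^N I(\mathbf z_j)W(wt(\mathbf z_j);p,q)$ with $\mathbf z_1,\dots,\mathbf z_N$ i.i.d. with pmf $f(\mathbf z;q)=q^{wt(\mathbf z)}(1-q)^{n-wt(\mathbf z)}$, and let $V(q)=\mathrm{var}_q[\hat P_{IS}(e;q)]$. Suppose $\sum_{i=t+1}^n P_p(e;i)>0$. Then the parameter $\hat q\in(0,1)$ that minimizes $V$ over $(0,1)$ satisfies $$\hat q=\frac1n\,\frac{\sum_{i=t+1}^{n} i\,W(i;p,\hat q)\,P_p(e;i)}{\sum_{i=t+1}^{n} W(i;p,\hat q)\,P_p(e;i)}.$$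
   Context: Setting: a linear block code of length $n$ is used over a binary symmetric channel (BSC) with cross-over probability $p$; w.l.o.g. the all-zero codeword is sent, so the channel output equals the error pattern $\mathbf z\in\{0,1\}^n$, whose bits are i.i.d. Bernoulli($p$). $wt(\mathbf z)$ is the number of ones in $\mathbf z$. $I(\mathbf z)=1$ if the decoder decodes $\mathbf z$ erroneously and $0$ otherwise; $t$ is the maximum number of errors the decoder always corrects. The weighting function is $W(i;p,q)=\frac{p^i(1-p)^{n-i}}{q^i(1-q)^{n-i}}$. $P_p(e;i)=\sum_{\mathbf z:\,wt(\mathbf z)=i} I(\mathbf z)\,p^i(1-p)^{n-i}$ is the joint probability that a decoding error occurs and the error pattern has weight $i$ on a BSC with parameter $p$. The word error rate is $P(e)=\sum_{\mathbf z}I(\mathbf z)p^{wt(\mathbf z)}(1-p)^{n-wt(\mathbf z)}$, and the variance is $V(q)=\frac1N\big(\mathbb E_q[I(\mathbf z)W^2(wt(\mathbf z);p,q)]-P(e)^2\big)$, where $\mathbb E_q$ is expectation under $f(\cdot;q)$. *)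

theory Defs
  imports Complex_Main
begin

text \<open>Error patterns in {0,1}^n are boolean lists of length n (True = 1).\<close>
definition patterns :: "nat \<Rightarrow> bool list set" where
  "patterns n = {z. length z = n}"

definition wt :: "bool list \<Rightarrow> nat" where
  "wt z = length (filter id z)"

definition W :: "nat \<Rightarrow> nat \<Rightarrow> real \<Rightarrow> real \<Rightarrow> real" where
  "W n i p q = (p ^ i * (1 - p) ^ (n - i)) / (q ^ i * (1 - q) ^ (n - i))"

definition f_pmf :: "nat \<Rightarrow> real \<Rightarrow> bool list \<Rightarrow> real" where
  "f_pmf n q z = q ^ wt z * (1 - q) ^ (n - wt z)"

text \<open>P_p(e;i): joint probability of decoding error and error weight i.
  The decoding-error indicator I is a predicate, I(z) = of_bool (err z).\<close>
definition Pe_i :: "nat \<Rightarrow> (bool list \<Rightarrow> bool) \<Rightarrow> real \<Rightarrow> nat \<Rightarrow> real" where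
  "Pe_i n err p i = (\<Sum>z\<in>{z\<in>patterns n. wt z = i}. of_bool (err z) * p ^ i * (1 - p) ^ (n - i))"

definition Perr :: "nat \<Rightarrow> (bool list \<Rightarrow> bool) \<Rightarrow> real \<Rightarrow> real" where
  "Perr n err p = (\<Sum>z\<in>patterns n. of_bool (err z) * f_pmf n p z)"

definition V :: "nat \<Rightarrow> nat \<Rightarrow> (bool list \<Rightarrow> bool) \<Rightarrow> real \<Rightarrow> real \<Rightarrow> real" where
  "V n N err p q = (1 / real N) *
     ((\<Sum>z\<in>patterns n. of_bool (err z) * (W n (wt z) p q)\<^sup>2 * f_pmf n q z) - (Perr n err p)\<^sup>2)"

end

theory Submission
  imports Defs
begin

lemma finite_patterns: "finite (patterns n)"
proof -
  have "patterns n \<subseteq> {xs. set xs \<subseteq> (UNIV::bool set) \<and> length xs = n}"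
    by (auto simp: patterns_def)
  thus ?thesis by (rule finite_subset) (rule finite_lists_length_eq, simp)
qed

lemma wt_le: "z \<in> patterns n \<Longrightarrow> wt z \<le> n"
  by (auto simp: patterns_def wt_def)

lemma Pe_nonneg: "0 \<le> p \<Longrightarrow> p \<le> 1 \<Longrightarrow> 0 \<le> Pe_i n err p i"
  unfolding Pe_i_def by (intro sum_nonneg) auto

lemma W_pos: "0 < p \<Longrightarrow> p < 1 \<Longrightarrow> 0 < q \<Longrightarrow> q < 1 \<Longrightarrow> 0 < W n i p q"
  unfolding W_def by auto

lemma W_exp: "0 < q \<Longrightarrow> q < 1 \<Longrightarrow>
  W n i p q = p ^ i * (1 - p) ^ (n - i) * exp (-(real i * ln q + real (n - i) * ln (1 - q)))"
proof -
  assume q: "0 < q" "q < 1"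
  have "exp (-(real i * ln q + real (n - i) * ln (1 - q))) = 1 / (q ^ i * (1 - q) ^ (n - i))"
  proof -
    have a: "exp (real i * ln q) = q ^ i" using q by (simp add: ln_realpow[symmetric])
    have b: "exp (real (n - i) * ln (1 - q)) = (1 - q) ^ (n - i)" using q by (simp add: ln_realpow[symmetric])
    show ?thesis by (simp only: exp_minus exp_add a b) (simp add: divide_inverse)
  qed
  thus ?thesis unfolding W_def by simp
qed

lemma E_deriv:
  assumes q: "0 < q" "q < 1"
  shows "((\<lambda>q. exp (-(real i * ln q + real (n - i) * ln (1 - q)))) has_field_derivative
     exp (-(real i * ln q + real (n - i) * ln (1 - q))) * (real (n - i) / (1 - q) - real i / q)) (at q)"
proof -
  have "((\<lambda>q. -(real i * ln q + real (n - i) * ln (1 - q))) has_real_derivative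
     (real (n - i) / (1 - q) - real i / q)) (at q)"
    using q by (auto intro!: derivative_eq_intros simp: field_simps)
  thus ?thesis by (rule DERIV_fun_exp)
qed

lemma V_eq:
  assumes "0 < q" "q < 1"
    and noerr: "\<And>z. z \<in> patterns n \<Longrightarrow> wt z \<le> t \<Longrightarrow> \<not> err z"
  shows "V n N err p q = (1 / real N) * ((\<Sum>i=t+1..n. W n i p q * Pe_i n err p i) - (Perr n err p)\<^sup>2)"
proof -
  let ?g = "\<lambda>z. of_bool (err z) * (W n (wt z) p q)\<^sup>2 * f_pmf n q z"
  have "(\<Sum>z\<in>patterns n. ?g z) = (\<Sum>i\<in>{0..n}. \<Sum>z\<in>{z\<in>patterns n. wt z = i}. ?g z)"
    by (rule sum.group[symmetric]) (auto simp: finite_patterns wt_le)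
  also have "\<dots> = (\<Sum>i\<in>{0..n}. W n i p q * Pe_i n err p i)"
  proof (rule sum.cong[OF refl])
    fix i
    have key: "W n i p q * (q ^ i * (1 - q) ^ (n - i)) = p ^ i * (1 - p) ^ (n - i)"
      using assms(1,2) unfolding W_def by simp
    have "(\<Sum>z\<in>{z\<in>patterns n. wt z = i}. ?g z) =
      (\<Sum>z\<in>{z\<in>patterns n. wt z = i}. W n i p q * (of_bool (err z) * p ^ i * (1 - p) ^ (n - i)))"
    proof (rule sum.cong[OF refl])
      fix z assume "z \<in> {z\<in>patterns n. wt z = i}"
      hence "wt z = i" by simp
      thus "?g z = W n i p q * (of_bool (err z) * p ^ i * (1 - p) ^ (n - i))"
        unfolding f_pmf_def using key by (simp add: power2_eq_square algebra_simps)
    qed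
    also have "\<dots> = W n i p q * Pe_i n err p i"
      unfolding Pe_i_def by (simp add: sum_distrib_left)
    finally show "(\<Sum>z\<in>{z\<in>patterns n. wt z = i}. ?g z) = W n i p q * Pe_i n err p i" .
  qed
  also have "\<dots> = (\<Sum>i=t+1..n. W n i p q * Pe_i n err p i)"
  proof (rule sum.mono_neutral_right)
    show "\<forall>i\<in>{0..n} - {t+1..n}. W n i p q * Pe_i n err p i = 0"
    proof
      fix i assume "i \<in> {0..n} - {t+1..n}"
      hence "i \<le> t" by auto
      hence "Pe_i n err p i = 0" unfolding Pe_i_def using noerr by (intro sum.neutral) auto
      thus "W n i p q * Pe_i n err p i = 0" by simp
    qed
  qed auto
  finally show ?thesis unfolding V_def by simp
qed

theorem theorem1:
  fixes n N t :: nat and p :: real and err :: "bool list \<Rightarrow> bool"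
  assumes "n \<ge> 1" and "N \<ge> 1"
    and "0 < p" and "p < 1"
    and "t < n"
    and "\<And>z. z \<in> patterns n \<Longrightarrow> wt z \<le> t \<Longrightarrow> \<not> err z"
    and "(\<Sum>i=t+1..n. Pe_i n err p i) > 0"
    and "0 < qh" and "qh < 1"
    and "\<And>q. 0 < q \<Longrightarrow> q < 1 \<Longrightarrow> V n N err p qh \<le> V n N err p q"
  shows "qh = (1 / real n) *
           ((\<Sum>i=t+1..n. real i * W n i p qh * Pe_i n err p i) /
            (\<Sum>i=t+1..n. W n i p qh * Pe_i n err p i))"
proof -
  define A where "A i = p ^ i * (1 - p) ^ (n - i) * Pe_i n err p i" for i
  define E where "E i q = exp (-(real i * ln q + real (n - i) * ln (1 - q)))" for i q
  define H where "H q = (1 / real N) * ((\<Sum>i=t+1..n. A i * E i q) - (Perr n err p)\<^sup>2)" for q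
  have HV: "H q = V n N err p q" if "0 < q" "q < 1" for q
    using V_eq[OF that assms(6)] W_exp[OF that] unfolding H_def A_def E_def
    by (simp add: mult_ac)
  define D where "D = (1 / real N) * (\<Sum>i=t+1..n. A i * (E i qh * (real (n - i) / (1 - qh) - real i / qh)))"
  have der: "(H has_field_derivative D) (at qh)"
    unfolding H_def D_def E_def using assms(2,8,9)
    by (auto intro!: derivative_eq_intros DERIV_sum DERIV_cmult E_deriv sum.cong simp: mult_ac)
  have lm: "\<forall>y. \<bar>qh - y\<bar> < min qh (1 - qh) \<longrightarrow> H qh \<le> H y"
  proof (intro allI impI)
    fix y assume "\<bar>qh - y\<bar> < min qh (1 - qh)"
    hence y: "0 < y" "y < 1" by auto
    show "H qh \<le> H y" using HV[OF y] HV[OF assms(8,9)] assms(10)[OF y] by simp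
  qed
  have mp: "0 < min qh (1 - qh)" using assms(8,9) by simp
  have D0: "D = 0" by (rule DERIV_local_min[OF der mp lm])
  define a where "a i = W n i p qh * Pe_i n err p i" for i
  have aE: "A i * E i qh = a i" for i
    using W_exp[OF assms(8,9), of n i p] unfolding a_def A_def E_def by simp
  have "(\<Sum>i=t+1..n. A i * (E i qh * (real (n - i) / (1 - qh) - real i / qh))) = 0"
    using D0 assms(2) unfolding D_def by simp
  hence "(\<Sum>i=t+1..n. a i * (real (n - i) / (1 - qh) - real i / qh)) = 0"
    using aE by (simp add: mult.assoc[symmetric])
  hence "(\<Sum>i=t+1..n. a i * (real (n - i) / (1 - qh) - real i / qh)) * (qh * (1 - qh)) = 0" by simp
  hence "(\<Sum>i=t+1..n. a i * (real n * qh - real i)) = 0"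
  proof -
    assume h: "(\<Sum>i=t+1..n. a i * (real (n - i) / (1 - qh) - real i / qh)) * (qh * (1 - qh)) = 0"
    have "(\<Sum>i=t+1..n. a i * (real (n - i) / (1 - qh) - real i / qh)) * (qh * (1 - qh))
       = (\<Sum>i=t+1..n. a i * (real n * qh - real i))"
      unfolding sum_distrib_right
    proof (rule sum.cong[OF refl])
      fix i assume "i \<in> {t+1..n}"
      hence "real (n - i) = real n - real i" by auto
      thus "a i * (real (n - i) / (1 - qh) - real i / qh) * (qh * (1 - qh)) = a i * (real n * qh - real i)"
        using assms(8,9) by (simp add: field_simps)
    qed
    thus ?thesis using h by simp
  qed
  hence eq: "real n * qh * (\<Sum>i=t+1..n. a i) = (\<Sum>i=t+1..n. real i * a i)"
    by (simp add: right_diff_distrib sum_subtractf sum_distrib_left mult_ac)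
  have apos: "0 < (\<Sum>i=t+1..n. a i)"
  proof -
    have nn: "\<And>i. 0 \<le> a i" unfolding a_def
      using W_pos[OF assms(3,4,8,9)] Pe_nonneg[of p] assms(3,4) by (simp add: less_imp_le)
    obtain i where i: "i \<in> {t+1..n}" "Pe_i n err p i \<noteq> 0"
      using assms(7) by (metis (no_types, lifting) less_irrefl sum.neutral)
    have "0 < a i" unfolding a_def using i(2) Pe_nonneg[of p n err i] assms(3,4)
        W_pos[OF assms(3,4,8,9)] by (simp add: order_le_neq_trans)
    moreover have "a i \<le> (\<Sum>i=t+1..n. a i)"
      by (rule member_le_sum) (use i nn in auto)
    ultimately show ?thesis by simp
  qed
  have "(\<Sum>i=t+1..n. real i * W n i p qh * Pe_i n err p i) = (\<Sum>i=t+1..n. real i * a i)"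
    unfolding a_def by (simp add: mult.assoc)
  then show ?thesis using eq apos assms(1) unfolding a_def[symmetric]
    by (simp add: field_simps)
qed

end
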